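(* Let $(X,d)$ be a compact metric space and let $f_1,f_2:X\to X$ be continuous. Suppose there is a point $c\in X$ with $f_1(x)=c$ for all $x\in X$. If the multiple mapping $F=\{f_1,f_2\}$ is (Hausdorff metric) sensitive, then $f_2$ is sensitive.
   Context: For the multiple mapping $F=\{f_1,f_2\}$ and $n\ge 1$, $F^n(x)=\{f_{i_1}f_{i_2}\cdots f_{i_n}(x)\mid i_1,\dots,i_n\in\{1,2\}\}$, a nonempty compact subset of $X$. The Hausdorff metric on nonempty compact subsets is $d_H(A,B)=\max\{\sup_{a\in A}\inf_{b\in B}d(a,b),\sup_{b\in B}\inf_{a\in A}d(a,b)\}$. $F$ is (Hausdorff metric) sensitive if there is $\delta>0$ such that for every nonempty open $U\subset X$ there exist $x,y\in U$ and $n\in\mathbb{Z}^+$ with $d_H(F^n(x),F^n(y))>\delta$. A continuous map $f:X\to X$ is sensitive if there is $\delta>0$ such that for every nonempty open $U\subset X$ there exist $x,y\in U$ and $n\in\mathbb{Z}^+$ with $d(f^n(x),f^n(y))>\delta$. Here $\mathbb{Z}^+=\{1,2,3,\dots\}$. *)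

theory Defs
  imports "HOL-Analysis.Analysis"
begin

definition hausdorff_dist :: "'a::metric_space set \<Rightarrow> 'a set \<Rightarrow> real" where
  "hausdorff_dist A B =
     max (SUP a\<in>A. INF b\<in>B. dist a b) (SUP b\<in>B. INF a\<in>A. dist a b)"

text \<open>Orbit set of the multiple mapping F = {f1, f2}:
  F^n(x) = { f_{i_1} o ... o f_{i_n} (x) | i_1,...,i_n in {1,2} }.\<close>
fun multi_iter :: "('a \<Rightarrow> 'a) \<Rightarrow> ('a \<Rightarrow> 'a) \<Rightarrow> nat \<Rightarrow> 'a \<Rightarrow> 'a set" where
  "multi_iter f1 f2 0 x = {x}"
| "multi_iter f1 f2 (Suc n) x = f1 ` multi_iter f1 f2 n x \<union> f2 ` multi_iter f1 f2 n x"

definition multi_sensitive :: "'a::metric_space set \<Rightarrow> ('a \<Rightarrow> 'a) \<Rightarrow> ('a \<Rightarrow> 'a) \<Rightarrow> bool" where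
  "multi_sensitive X f1 f2 \<longleftrightarrow>
     (\<exists>\<delta>>0. \<forall>U. openin (top_of_set X) U \<and> U \<noteq> {} \<longrightarrow>
        (\<exists>x\<in>U. \<exists>y\<in>U. \<exists>n\<ge>1. hausdorff_dist (multi_iter f1 f2 n x) (multi_iter f1 f2 n y) > \<delta>))"

definition sensitive :: "'a::metric_space set \<Rightarrow> ('a \<Rightarrow> 'a) \<Rightarrow> bool" where
  "sensitive X f \<longleftrightarrow>
     (\<exists>\<delta>>0. \<forall>U. openin (top_of_set X) U \<and> U \<noteq> {} \<longrightarrow>
        (\<exists>x\<in>U. \<exists>y\<in>U. \<exists>n\<ge>1. dist ((f ^^ n) x) ((f ^^ n) y) > \<delta>))"

end

theory Submission
  imports Defs
begin

lemma multi_iter_eq: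
  fixes g h :: "'a \<Rightarrow> 'a"
  assumes "h ` X \<subseteq> X" "c \<in> X" "\<And>x. x \<in> X \<Longrightarrow> g x = c" "x \<in> X"
  shows "multi_iter g h n x = insert ((h ^^ n) x) {(h ^^ k) c | k. k < n}
         \<and> multi_iter g h n x \<subseteq> X"
proof (induction n)
  case 0
  then show ?case using assms by auto
next
  case (Suc n)
  let ?M = "multi_iter g h n x"
  have sub: "?M \<subseteq> X" using Suc by blast
  have ne: "?M \<noteq> {}" using Suc by blast
  have A: "g ` ?M = {c}" using sub ne assms(3) by fastforce
  have B: "h ` ?M = insert ((h ^^ Suc n) x) {(h ^^ Suc k) c | k. k < n}"
    using Suc by auto
  have C: "{(h ^^ k) c | k. k < Suc n} = insert c {(h ^^ Suc k) c | k. k < n}"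
  proof (intro set_eqI iffI)
    fix z assume "z \<in> {(h ^^ k) c | k. k < Suc n}"
    then obtain k where "z = (h ^^ k) c" "k < Suc n" by blast
    then show "z \<in> insert c {(h ^^ Suc k) c | k. k < n}"
      by (cases k) auto
  next
    fix z assume "z \<in> insert c {(h ^^ Suc k) c | k. k < n}"
    then show "z \<in> {(h ^^ k) c | k. k < Suc n}"
    proof
      assume "z = c" then show ?thesis by (auto intro: exI[of _ 0])
    next
      assume "z \<in> {(h ^^ Suc k) c | k. k < n}"
      then obtain k where "z = (h ^^ Suc k) c" "k < n" by blast
      then show ?thesis by (intro CollectI exI[of _ "Suc k"]) simp
    qed
  qed
  have eq: "multi_iter g h (Suc n) x = insert ((h ^^ Suc n) x) {(h ^^ k) c | k. k < Suc n}"
    using A B C by auto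
  have "multi_iter g h (Suc n) x \<subseteq> X" using sub assms(1,2) A by auto
  then show ?case using eq by blast
qed

lemma haus_le:
  fixes A B :: "'a::metric_space set"
  assumes "finite A" "finite B" "A \<noteq> {}" "B \<noteq> {}"
    and "\<And>a. a \<in> A \<Longrightarrow> \<exists>b\<in>B. dist a b \<le> r"
    and "\<And>b. b \<in> B \<Longrightarrow> \<exists>a\<in>A. dist a b \<le> r"
  shows "hausdorff_dist A B \<le> r"
proof -
  have 1: "(SUP a\<in>A. INF b\<in>B. dist a b) \<le> r"
  proof (rule cSUP_least)
    fix a assume "a \<in> A"
    then obtain b where "b \<in> B" "dist a b \<le> r" using assms(5) by blast
    moreover have "(INF b\<in>B. dist a b) \<le> dist a b"
      using \<open>b \<in> B\<close> assms(2) by (intro cINF_lower) auto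
    ultimately show "(INF b\<in>B. dist a b) \<le> r" by linarith
  qed (use assms in auto)
  have 2: "(SUP b\<in>B. INF a\<in>A. dist a b) \<le> r"
  proof (rule cSUP_least)
    fix b assume "b \<in> B"
    then obtain a where "a \<in> A" "dist a b \<le> r" using assms(6) by blast
    moreover have "(INF a\<in>A. dist a b) \<le> dist a b"
      using \<open>a \<in> A\<close> assms(1) by (intro cINF_lower) auto
    ultimately show "(INF a\<in>A. dist a b) \<le> r" by linarith
  qed (use assms in auto)
  show ?thesis using 1 2 unfolding hausdorff_dist_def by simp
qed

lemma haus_bound:
  fixes g h :: "'a::metric_space \<Rightarrow> 'a"
  assumes "h ` X \<subseteq> X" "c \<in> X" "\<And>x. x \<in> X \<Longrightarrow> g x = c" "x \<in> X" "y \<in> X"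
  shows "hausdorff_dist (multi_iter g h n x) (multi_iter g h n y)
          \<le> dist ((h ^^ n) x) ((h ^^ n) y)"
proof -
  let ?S = "{(h ^^ k) c | k. k < n}"
  have ex: "multi_iter g h n x = insert ((h ^^ n) x) ?S"
    using multi_iter_eq[where g=g and h=h and X=X and c=c, OF assms(1,2,3,4)] by blast
  have ey: "multi_iter g h n y = insert ((h ^^ n) y) ?S"
    using multi_iter_eq[where g=g and h=h and X=X and c=c, OF assms(1,2,3,5)] by blast
  have fin: "finite ?S" by simp
  show ?thesis unfolding ex ey
    by (rule haus_le) (use fin in \<open>auto simp: dist_commute\<close>)
qed

theorem theorem3p2:
  fixes X :: "'a::metric_space set" and f1 f2 :: "'a \<Rightarrow> 'a" and c :: 'a
  assumes "compact X"
    and "continuous_on X f1" and "f1 ` X \<subseteq> X"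
    and "continuous_on X f2" and "f2 ` X \<subseteq> X"
    and "c \<in> X" and "\<And>x. x \<in> X \<Longrightarrow> f1 x = c"
    and "multi_sensitive X f1 f2"
  shows "sensitive X f2"
proof -
  obtain \<delta> where d: "\<delta> > 0" and H: "\<forall>U. openin (top_of_set X) U \<and> U \<noteq> {} \<longrightarrow>
        (\<exists>x\<in>U. \<exists>y\<in>U. \<exists>n\<ge>1. hausdorff_dist (multi_iter f1 f2 n x) (multi_iter f1 f2 n y) > \<delta>)"
    using assms(8) unfolding multi_sensitive_def by blast
  show ?thesis unfolding sensitive_def
  proof (intro exI[of _ \<delta>] conjI allI impI d)
    fix U assume U: "openin (top_of_set X) U \<and> U \<noteq> {}"
    then have UX: "U \<subseteq> X" by (meson openin_imp_subset)
    obtain x y n where xy: "x \<in> U" "y \<in> U" "n \<ge> 1"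
      and h: "hausdorff_dist (multi_iter f1 f2 n x) (multi_iter f1 f2 n y) > \<delta>"
      using H U by blast
    have "hausdorff_dist (multi_iter f1 f2 n x) (multi_iter f1 f2 n y)
          \<le> dist ((f2 ^^ n) x) ((f2 ^^ n) y)"
      using haus_bound[where g=f1 and h=f2 and X=X and c=c, OF assms(5,6,7)] xy UX by blast
    then show "\<exists>x\<in>U. \<exists>y\<in>U. \<exists>n\<ge>1. dist ((f2 ^^ n) x) ((f2 ^^ n) y) > \<delta>"
      using xy h by force
  qed
qed

end
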